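(* Let $\mathcal{A}$ be a commutative integral domain with unit and of characteristic zero, and let $\mathcal{X}$ be a nonzero locally nilpotent derivation of $\mathcal{A}$. Let $s\in\mathcal{A}$ be a local slice of $\mathcal{X}$, put $c=\mathcal{X}(s)$, and let $p,c_1\in\mathcal{A}$ be such that $c=pc_1$. Then there exists $s_1\in\mathcal{A}$ with $\mathcal{X}(s_1)=c_1$ if and only if the ideal $p\mathcal{A}$ contains an element of the form $s+a$ with $a\in\mathcal{A}^{\mathcal{X}}$.
   Context: A derivation $\mathcal{X}$ of $\mathcal{A}$ is locally nilpotent if for every $a\in\mathcal{A}$ there is $n\ge1$ with $\mathcal{X}^n(a)=0$. The ring of constants is $\mathcal{A}^{\mathcal{X}}=\{a\in\mathcal{A}:\mathcal{X}(a)=0\}$. An element $s\in\mathcal{A}$ is a local slice of $\mathcal{X}$ if $\mathcal{X}(s)\neq0$ and $\mathcal{X}^2(s)=0$. *)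

theory Defs
  imports Main
begin

definition is_derivation :: "('a::comm_ring_1 \<Rightarrow> 'a) \<Rightarrow> bool" where
  "is_derivation D \<longleftrightarrow>
     (\<forall>a b. D (a + b) = D a + D b) \<and> (\<forall>a b. D (a * b) = a * D b + D a * b)"

definition locally_nilpotent :: "('a::comm_ring_1 \<Rightarrow> 'a) \<Rightarrow> bool" where
  "locally_nilpotent D \<longleftrightarrow> (\<forall>a. \<exists>n\<ge>1. (D ^^ n) a = 0)"

definition constants :: "('a::comm_ring_1 \<Rightarrow> 'a) \<Rightarrow> 'a set" where
  "constants D = {a. D a = 0}"

definition local_slice :: "('a::comm_ring_1 \<Rightarrow> 'a) \<Rightarrow> 'a \<Rightarrow> bool" where
  "local_slice D s \<longleftrightarrow> D s \<noteq> 0 \<and> D (D s) = 0"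

end

theory Submission
  imports Defs
begin

lemma der_basic:
  fixes X :: "'a::comm_ring_1 \<Rightarrow> 'a"
  assumes "is_derivation X"
  shows der_add: "X (a + b) = X a + X b"
    and der_mult: "X (a * b) = a * X b + X a * b"
  using assms unfolding is_derivation_def by auto

lemma der_zero:
  fixes X :: "'a::comm_ring_1 \<Rightarrow> 'a"
  assumes "is_derivation X" shows "X 0 = 0"
  using der_add[OF assms, of 0 0] by simp

lemma der_one:
  fixes X :: "'a::comm_ring_1 \<Rightarrow> 'a"
  assumes "is_derivation X" shows "X 1 = 0"
  using der_mult[OF assms, of 1 1] by simp

lemma der_of_nat:
  fixes X :: "'a::comm_ring_1 \<Rightarrow> 'a"
  assumes "is_derivation X" shows "X (of_nat n) = 0"
  by (induction n) (simp_all add: der_zero[OF assms] der_one[OF assms] der_add[OF assms])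

lemma der_sum:
  fixes X :: "'a::comm_ring_1 \<Rightarrow> 'a"
  assumes "is_derivation X" shows "X (sum f A) = (\<Sum>i\<in>A. X (f i))"
  by (induction A rule: infinite_finite_induct) (simp_all add: der_zero[OF assms] der_add[OF assms])

lemma der_diff:
  fixes X :: "'a::comm_ring_1 \<Rightarrow> 'a"
  assumes "is_derivation X" shows "X (a - b) = X a - X b"
  using der_add[OF assms, of "a - b" b] by (simp add: algebra_simps)

lemma leibniz:
  fixes X :: "'a::comm_ring_1 \<Rightarrow> 'a"
  assumes D: "is_derivation X"
  shows "(X ^^ n) (x * y) = (\<Sum>i = 0..n. of_nat (n choose i) * (X ^^ i) x * (X ^^ (n-i)) y)"
proof (induction n)
  case 0 then show ?case by simp
next
  case (Suc n)
  have "(X ^^ Suc n) (x * y) = X (\<Sum>i = 0..n. of_nat (n choose i) * (X ^^ i) x * (X ^^ (n-i)) y)"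
    using Suc by simp
  also have "\<dots> = (\<Sum>i = 0..n. of_nat (n choose i) * ((X ^^ Suc i) x * (X ^^ (n-i)) y + (X ^^ i) x * (X ^^ (Suc n - i)) y))"
    apply (simp add: der_sum[OF D] der_mult[OF D] der_of_nat[OF D])
    apply (rule sum.cong, simp)
    apply (simp add: algebra_simps Suc_diff_le)
    done
  also have "\<dots> = (\<Sum>i = 0..Suc n. of_nat (Suc n choose i) * (X ^^ i) x * (X ^^ (Suc n - i)) y)"
    (is "?L = ?R")
  proof -
    define A where "A i = (X ^^ i) x" for i
    define B where "B j = (X ^^ j) y" for j
    have L: "?L = (\<Sum>i = 0..n. of_nat (n choose i) * A (Suc i) * B (n - i))
                 + (\<Sum>i = 0..n. of_nat (n choose i) * A i * B (Suc n - i))"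
      by (simp add: A_def B_def algebra_simps sum.distrib)
    have S2: "(\<Sum>i = 0..n. of_nat (n choose i) * A i * B (Suc n - i))
         = (\<Sum>i = 0..Suc n. of_nat (n choose i) * A i * B (Suc n - i))"
      by (simp add: binomial_eq_0)
    also have "\<dots> = A 0 * B (Suc n) + (\<Sum>i = 0..n. of_nat (n choose Suc i) * A (Suc i) * B (n - i))"
      by (subst sum.atLeast0_atMost_Suc_shift) simp
    finally have S2': "(\<Sum>i = 0..n. of_nat (n choose i) * A i * B (Suc n - i))
         = A 0 * B (Suc n) + (\<Sum>i = 0..n. of_nat (n choose Suc i) * A (Suc i) * B (n - i))" .
    have "?R = (\<Sum>i = 0..Suc n. of_nat (Suc n choose i) * A i * B (Suc n - i))"
      by (simp add: A_def B_def)
    also have "\<dots> = A 0 * B (Suc n) + (\<Sum>i = 0..n. of_nat (Suc n choose Suc i) * A (Suc i) * B (n - i))"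
      by (subst sum.atLeast0_atMost_Suc_shift) simp
    also have "\<dots> = A 0 * B (Suc n) + (\<Sum>i = 0..n. of_nat (n choose i) * A (Suc i) * B (n - i))
        + (\<Sum>i = 0..n. of_nat (n choose Suc i) * A (Suc i) * B (n - i))"
      by (simp add: algebra_simps sum.distrib)
    finally show ?thesis using L S2' by (simp add: algebra_simps)
  qed
  finally show ?case .
qed

lemma funpow_zero:
  fixes X :: "'a::comm_ring_1 \<Rightarrow> 'a"
  assumes D: "is_derivation X" shows "(X ^^ k) 0 = 0"
  by (induction k) (simp_all add: der_zero[OF D])

lemma vanish:
  fixes X :: "'a::comm_ring_1 \<Rightarrow> 'a"
  assumes D: "is_derivation X" and h: "(X ^^ Suc m) x = 0" and k: "k > m"
  shows "(X ^^ k) x = 0"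
proof -
  have "k = (k - Suc m) + Suc m" using k by simp
  then have "(X ^^ k) x = (X ^^ (k - Suc m)) ((X ^^ Suc m) x)"
    by (metis funpow_add o_apply)
  then show ?thesis using h funpow_zero[OF D] by simp
qed

lemma degree_exists:
  fixes X :: "'a::comm_ring_1 \<Rightarrow> 'a"
  assumes L: "locally_nilpotent X" and x: "x \<noteq> 0"
  shows "\<exists>m. (X ^^ m) x \<noteq> 0 \<and> (X ^^ Suc m) x = 0"
proof -
  obtain n where n: "(X ^^ n) x = 0" using L unfolding locally_nilpotent_def by blast
  define N where "N = (LEAST k. (X ^^ k) x = 0)"
  have N: "(X ^^ N) x = 0" unfolding N_def by (rule LeastI[of _ n]) (rule n)
  have "N \<noteq> 0" using N x by (metis funpow_0)
  then obtain m where m: "N = Suc m" by (cases N) auto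
  have "(X ^^ m) x \<noteq> 0"
    using not_less_Least[of m "\<lambda>k. (X ^^ k) x = 0"] m unfolding N_def by auto
  then show ?thesis using N m by blast
qed

lemma top_term:
  fixes X :: "'a::comm_ring_1 \<Rightarrow> 'a"
  assumes D: "is_derivation X" and hx: "(X ^^ Suc m) x = 0" and hy: "(X ^^ Suc n) y = 0"
  shows "(X ^^ (m + n)) (x * y) = of_nat ((m + n) choose m) * (X ^^ m) x * (X ^^ n) y"
proof -
  have fin: "finite {0..m+n}" by simp
  have mem: "m \<in> {0..m+n}" by simp
  have z: "(\<Sum>i\<in>{0..m+n} - {m}. of_nat ((m+n) choose i) * (X ^^ i) x * (X ^^ (m+n-i)) y) = 0"
  proof (rule sum.neutral, rule ballI)
    fix i assume i: "i \<in> {0..m+n} - {m}"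
    show "of_nat ((m+n) choose i) * (X ^^ i) x * (X ^^ (m+n-i)) y = 0"
    proof (cases "i < m")
      case True
      then have "(X ^^ (m+n-i)) y = 0" using vanish[OF D hy] by simp
      then show ?thesis by simp
    next
      case False
      then have "i > m" using i by auto
      then have "(X ^^ i) x = 0" using vanish[OF D hx] by simp
      then show ?thesis by simp
    qed
  qed
  show ?thesis
    unfolding leibniz[OF D] sum.remove[OF fin mem] z by simp
qed

lemma fact_closed:
  fixes X :: "'a::{idom, ring_char_0} \<Rightarrow> 'a"
  assumes D: "is_derivation X" and L: "locally_nilpotent X"
    and xy: "X (x * y) = 0" and x: "x \<noteq> 0" and y: "y \<noteq> 0"
  shows "X x = 0"
proof -
  obtain m where m1: "(X ^^ m) x \<noteq> 0" and m2: "(X ^^ Suc m) x = 0"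
    using degree_exists[OF L x] by blast
  obtain n where n1: "(X ^^ n) y \<noteq> 0" and n2: "(X ^^ Suc n) y = 0"
    using degree_exists[OF L y] by blast
  have T: "(X ^^ (m + n)) (x * y) \<noteq> 0"
    unfolding top_term[OF D m2 n2] using m1 n1 by simp
  have "m + n = 0"
  proof (rule ccontr)
    assume "m + n \<noteq> 0"
    then obtain k where k: "m + n = Suc k" by (cases "m + n") auto
    then have "(X ^^ (m + n)) (x * y) = (X ^^ k) (X (x * y))"
      by (simp only: k funpow_Suc_right o_apply)
    then show False using T xy funpow_zero[OF D] by simp
  qed
  then show ?thesis using m2 by simp
qed

theorem lemma3p2:
  fixes X :: "'a::{idom, ring_char_0} \<Rightarrow> 'a"
    and s p c1 :: 'a
  assumes "is_derivation X"
    and "locally_nilpotent X"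
    and "X \<noteq> (\<lambda>_. 0)"
    and "local_slice X s"
    and "X s = p * c1"
  shows "(\<exists>s1. X s1 = c1) \<longleftrightarrow> (\<exists>a \<in> constants X. p dvd (s + a))"
proof -
  note D = assms(1)
  have cs: "X s \<noteq> 0" "X (X s) = 0" using assms(4) unfolding local_slice_def by auto
  have p0: "p \<noteq> 0" and c0: "c1 \<noteq> 0" using cs assms(5) by auto
  have Xp: "X p = 0" using fact_closed[OF D assms(2) _ p0 c0] cs assms(5) by simp
  show ?thesis
  proof
    assume "\<exists>s1. X s1 = c1"
    then obtain s1 where s1: "X s1 = c1" by blast
    define a where "a = p * s1 - s"
    have "X a = 0" unfolding a_def using s1 Xp assms(5)
      by (simp add: der_diff[OF D] der_mult[OF D])
    moreover have "p dvd (s + a)" unfolding a_def by simp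
    ultimately show "\<exists>a \<in> constants X. p dvd (s + a)" unfolding constants_def by blast
  next
    assume "\<exists>a \<in> constants X. p dvd (s + a)"
    then obtain a t where a: "X a = 0" and t: "s + a = p * t"
      unfolding constants_def by (auto simp: dvd_def)
    have "X (s + a) = p * c1" using a assms(5) by (simp add: der_add[OF D])
    moreover have "X (s + a) = p * X t" using t Xp by (simp add: der_mult[OF D])
    ultimately have "X t = c1" using p0 by simp
    then show "\<exists>s1. X s1 = c1" by blast
  qed
qed

end
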